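(* Let $k$ be a field of characteristic zero, $n\ge1$, $S=k[x_1,\ldots,x_n]$, and $(S,L)$ a triangularizable Lie–Rinehart algebra with basis $\alpha_1,\ldots,\alpha_n$ and enveloping algebra $U$. The restriction of $d^0:U\to\mathcal{X}^1$, $d^0(u)=\sum_{k=1}^n[u,x_k]\hat x_k$, to $F_1U=S\oplus\bigoplus_{i=1}^nS\alpha_i$ has kernel $F_0U=S$.
   Context: Triangularizable: $L\subseteq\operatorname{Der}(S)$ an $S$-submodule and Lie subalgebra, free with basis of derivations $\alpha_1,\ldots,\alpha_n$ such that $\alpha_i(x_j)=0$ for $i>j$ and $\alpha_1(x_1)\cdots\alpha_n(x_n)\neq0$. $U$ is the universal enveloping algebra of $(S,L)$, with $[\alpha,s]=\alpha(s)$. $\mathcal{X}^1=U\otimes_k W^*$ where $W=\operatorname{span}_k(x_1,\ldots,x_n)$ and $\hat x_1,\ldots,\hat x_n$ is the dual basis. $F_pU$ is the $S$-span of the monomials $\alpha_n^{i_n}\cdots\alpha_1^{i_1}$ with $i_1+\cdots+i_n\le p$. *)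

theory Defs
  imports "HOL-Library.Poly_Mapping"
begin

(* Polynomials over 'k in countably many variables x_0, x_1, ...; a monomial is a
finitely supported exponent vector nat \<Rightarrow>0 nat.  The ring S = k[x_1..x_n]
is the subring of polynomials only involving the variables x_0..x_(n-1). *)

type_synonym 'k mpoly = "(nat \<Rightarrow>\<^sub>0 nat) \<Rightarrow>\<^sub>0 'k"

definition PVar :: "nat \<Rightarrow> 'k::comm_ring_1 mpoly" where
  "PVar i = Poly_Mapping.single (Poly_Mapping.single i 1) 1"

definition PConst :: "'k::comm_ring_1 \<Rightarrow> 'k mpoly" where
  "PConst c = Poly_Mapping.single 0 c"

definition PolyRing :: "nat \<Rightarrow> ('k::comm_ring_1) mpoly set" where
  "PolyRing n = {p. \<forall>m \<in> Poly_Mapping.keys p. \<forall>i \<in> Poly_Mapping.keys m. i < n}"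

(* k-linear derivations of S = PolyRing n, represented as maps that vanish outside S. *)
definition is_derivation :: "nat \<Rightarrow> ('k::comm_ring_1 mpoly \<Rightarrow> 'k mpoly) \<Rightarrow> bool" where
  "is_derivation n D \<longleftrightarrow>
     (\<forall>p \<in> PolyRing n. D p \<in> PolyRing n) \<and>
     (\<forall>p. p \<notin> PolyRing n \<longrightarrow> D p = 0) \<and>
     (\<forall>p \<in> PolyRing n. \<forall>q \<in> PolyRing n. D (p + q) = D p + D q) \<and>
     (\<forall>c. \<forall>p \<in> PolyRing n. D (PConst c * p) = PConst c * D p) \<and>
     (\<forall>p \<in> PolyRing n. \<forall>q \<in> PolyRing n. D (p * q) = p * D q + q * D p)"

definition der_smult :: "'k::comm_ring_1 mpoly \<Rightarrow> ('k mpoly \<Rightarrow> 'k mpoly) \<Rightarrow> ('k mpoly \<Rightarrow> 'k mpoly)" where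
  "der_smult s D = (\<lambda>p. s * D p)"

definition der_bracket :: "('k::comm_ring_1 mpoly \<Rightarrow> 'k mpoly) \<Rightarrow> ('k mpoly \<Rightarrow> 'k mpoly) \<Rightarrow> ('k mpoly \<Rightarrow> 'k mpoly)" where
  "der_bracket D E = (\<lambda>p. D (E p) - E (D p))"

definition triangularizable ::
  "nat \<Rightarrow> ('k::comm_ring_1 mpoly \<Rightarrow> 'k mpoly) set \<Rightarrow> (nat \<Rightarrow> ('k mpoly \<Rightarrow> 'k mpoly)) \<Rightarrow> bool" where
  "triangularizable n L \<alpha> \<longleftrightarrow>
     (\<forall>D \<in> L. is_derivation n D) \<and>
     (\<forall>D \<in> L. \<forall>E \<in> L. (\<lambda>p. D p + E p) \<in> L) \<and>
     (\<forall>s \<in> PolyRing n. \<forall>D \<in> L. der_smult s D \<in> L) \<and>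
     (\<forall>D \<in> L. \<forall>E \<in> L. der_bracket D E \<in> L) \<and>
     (\<forall>i < n. \<alpha> i \<in> L) \<and>
     (\<forall>D \<in> L. \<exists>!s. (\<forall>i < n. s i \<in> PolyRing n) \<and> (\<forall>i. i \<ge> n \<longrightarrow> s i = 0) \<and>
                    D = (\<lambda>p. \<Sum>i<n. s i * \<alpha> i p)) \<and>
     (\<forall>i < n. \<forall>j < n. i > j \<longrightarrow> \<alpha> i (PVar j) = 0) \<and>
     (\<Prod>i<n. \<alpha> i (PVar i)) \<noteq> 0"

(* The enveloping algebra U of (S,L), described through the structure maps
iota : S \<rightarrow> U (ring map) and j : L \<rightarrow> U, with [j alpha, iota s] = iota(alpha s),
j compatible with the S-module and Lie structure, and with
F_1 U = S \<oplus> (\<oplus>_i S alpha_i) (direct sum, free S-module). *)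
definition enveloping_data ::
  "nat \<Rightarrow> ('k::comm_ring_1 mpoly \<Rightarrow> 'k mpoly) set \<Rightarrow> (nat \<Rightarrow> ('k mpoly \<Rightarrow> 'k mpoly))
   \<Rightarrow> ('k mpoly \<Rightarrow> 'u::ring_1) \<Rightarrow> (('k mpoly \<Rightarrow> 'k mpoly) \<Rightarrow> 'u) \<Rightarrow> bool" where
  "enveloping_data n L \<alpha> \<iota> j \<longleftrightarrow>
     \<iota> 1 = 1 \<and>
     (\<forall>p \<in> PolyRing n. \<forall>q \<in> PolyRing n. \<iota> (p + q) = \<iota> p + \<iota> q \<and> \<iota> (p * q) = \<iota> p * \<iota> q) \<and>
     (\<forall>D \<in> L. \<forall>E \<in> L. j (\<lambda>p. D p + E p) = j D + j E) \<and>
     (\<forall>s \<in> PolyRing n. \<forall>D \<in> L. j (der_smult s D) = \<iota> s * j D) \<and>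
     (\<forall>D \<in> L. \<forall>E \<in> L. j (der_bracket D E) = j D * j E - j E * j D) \<and>
     (\<forall>D \<in> L. \<forall>s \<in> PolyRing n. j D * \<iota> s - \<iota> s * j D = \<iota> (D s)) \<and>
     (\<forall>s0 s. s0 \<in> PolyRing n \<longrightarrow> (\<forall>i<n. s i \<in> PolyRing n) \<longrightarrow>
        \<iota> s0 + (\<Sum>i<n. \<iota> (s i) * j (\<alpha> i)) = 0 \<longrightarrow> s0 = 0 \<and> (\<forall>i<n. s i = 0))"

definition F1U :: "nat \<Rightarrow> (nat \<Rightarrow> ('k::comm_ring_1 mpoly \<Rightarrow> 'k mpoly)) \<Rightarrow> ('k mpoly \<Rightarrow> 'u::ring_1)
   \<Rightarrow> (('k mpoly \<Rightarrow> 'k mpoly) \<Rightarrow> 'u) \<Rightarrow> 'u set" where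
  "F1U n \<alpha> \<iota> j = {\<iota> s0 + (\<Sum>i<n. \<iota> (s i) * j (\<alpha> i)) | s0 s.
      s0 \<in> PolyRing n \<and> (\<forall>i<n. s i \<in> PolyRing n)}"

definition F0U :: "nat \<Rightarrow> ('k::comm_ring_1 mpoly \<Rightarrow> 'u::ring_1) \<Rightarrow> 'u set" where
  "F0U n \<iota> = \<iota> ` PolyRing n"

(* X^1 = U \<otimes>_k W^* is identified with U^n via the dual basis hat x_0..hat x_(n-1):
an element is the function k \<mapsto> coefficient of hat x_k (zero for k \<ge> n).
d^0(u) = \<Sum>_k [u, x_k] hat x_k. *)
definition d0 :: "nat \<Rightarrow> ('k::comm_ring_1 mpoly \<Rightarrow> 'u::ring_1) \<Rightarrow> 'u \<Rightarrow> (nat \<Rightarrow> 'u)" where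
  "d0 n \<iota> u = (\<lambda>k. if k < n then u * \<iota> (PVar k) - \<iota> (PVar k) * u else 0)"

end

theory Submission
  imports Defs
begin

lemma PolyRing_zero: "0 \<in> PolyRing n"
  by (simp add: PolyRing_def)

lemma PolyRing_PVar: "k < n \<Longrightarrow> PVar k \<in> PolyRing n"
  by (simp add: PolyRing_def PVar_def)

lemma PolyRing_mult:
  assumes "p \<in> PolyRing n" "q \<in> PolyRing n"
  shows "p * q \<in> PolyRing n"
  unfolding PolyRing_def
proof (intro CollectI ballI)
  fix m i assume m: "m \<in> Poly_Mapping.keys (p * q)" and i: "i \<in> Poly_Mapping.keys m"
  have "m \<in> {a + b | a b. a \<in> Poly_Mapping.keys p \<and> b \<in> Poly_Mapping.keys q}"
    using subsetD[OF keys_mult m] .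
  then obtain a b where ab: "m = a + b" "a \<in> Poly_Mapping.keys p" "b \<in> Poly_Mapping.keys q"
    by blast
  have "i \<in> Poly_Mapping.keys a \<union> Poly_Mapping.keys b"
    using subsetD[OF keys_add, of i a b] i ab(1) by simp
  then have "i \<in> Poly_Mapping.keys a \<or> i \<in> Poly_Mapping.keys b" by simp
  then show "i < n" using assms ab unfolding PolyRing_def by blast
qed

theorem lemma3p1:
  fixes n :: nat
    and L :: "('k::field_char_0 mpoly \<Rightarrow> 'k mpoly) set"
    and \<alpha> :: "nat \<Rightarrow> ('k mpoly \<Rightarrow> 'k mpoly)"
    and \<iota> :: "'k mpoly \<Rightarrow> 'u::ring_1"
    and j :: "('k mpoly \<Rightarrow> 'k mpoly) \<Rightarrow> 'u"
  assumes "n \<ge> 1"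
    and "triangularizable n L \<alpha>"
    and "enveloping_data n L \<alpha> \<iota> j"
  shows "{u \<in> F1U n \<alpha> \<iota> j. d0 n \<iota> u = (\<lambda>k. 0)} = F0U n \<iota>"
proof -
  note T = assms(2)[unfolded triangularizable_def]
  note E = assms(3)[unfolded enveloping_data_def]
  have T1: "\<forall>D \<in> L. is_derivation n D" using T by (rule conjunct1)
  have T5: "\<forall>i < n. \<alpha> i \<in> L" using T[THEN conjunct2, THEN conjunct2, THEN conjunct2, THEN conjunct2] by (rule conjunct1)
  have T7: "\<forall>i < n. \<forall>j < n. i > j \<longrightarrow> \<alpha> i (PVar j) = 0"
    using T[THEN conjunct2, THEN conjunct2, THEN conjunct2, THEN conjunct2, THEN conjunct2, THEN conjunct2] by (rule conjunct1)
  have prodnz: "(\<Prod>i<n. \<alpha> i (PVar i)) \<noteq> 0"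
    using T[THEN conjunct2, THEN conjunct2, THEN conjunct2, THEN conjunct2, THEN conjunct2, THEN conjunct2] by (rule conjunct2)
  have E2: "\<forall>p \<in> PolyRing n. \<forall>q \<in> PolyRing n. \<iota> (p + q) = \<iota> p + \<iota> q \<and> \<iota> (p * q) = \<iota> p * \<iota> q"
    using E[THEN conjunct2] by (rule conjunct1)
  have E6: "\<forall>D \<in> L. \<forall>s \<in> PolyRing n. j D * \<iota> s - \<iota> s * j D = \<iota> (D s)"
    using E[THEN conjunct2, THEN conjunct2, THEN conjunct2, THEN conjunct2, THEN conjunct2] by (rule conjunct1)
  have E7: "\<forall>s0 s. s0 \<in> PolyRing n \<longrightarrow> (\<forall>i<n. s i \<in> PolyRing n) \<longrightarrow>
        \<iota> s0 + (\<Sum>i<n. \<iota> (s i) * j (\<alpha> i)) = 0 \<longrightarrow> s0 = 0 \<and> (\<forall>i<n. s i = 0)"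
    using E[THEN conjunct2, THEN conjunct2, THEN conjunct2, THEN conjunct2, THEN conjunct2] by (rule conjunct2)
  have add: "\<And>p q. p \<in> PolyRing n \<Longrightarrow> q \<in> PolyRing n \<Longrightarrow> \<iota> (p + q) = \<iota> p + \<iota> q"
    using E2 by simp
  have mul: "\<And>p q. p \<in> PolyRing n \<Longrightarrow> q \<in> PolyRing n \<Longrightarrow> \<iota> (p * q) = \<iota> p * \<iota> q"
    using E2 by simp
  have comm: "\<And>D s. D \<in> L \<Longrightarrow> s \<in> PolyRing n \<Longrightarrow> j D * \<iota> s - \<iota> s * j D = \<iota> (D s)"
    using E6 by simp
  have indep: "\<And>s0 s. s0 \<in> PolyRing n \<Longrightarrow> (\<forall>i<n. s i \<in> PolyRing n) \<Longrightarrow>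
        \<iota> s0 + (\<Sum>i<n. \<iota> (s i) * j (\<alpha> i)) = 0 \<Longrightarrow> s0 = 0 \<and> (\<forall>i<n. s i = 0)"
    using E7 by blast
  have i0: "\<iota> 0 = 0"
    using add[OF PolyRing_zero PolyRing_zero] by simp
  have inj: "p = 0" if "p \<in> PolyRing n" "\<iota> p = 0" for p
    using indep[of p "\<lambda>_. 0", OF that(1)] i0 that(2) by (simp add: PolyRing_zero)
  have derL: "\<And>i. i < n \<Longrightarrow> \<alpha> i \<in> L" using T5 by simp
  have derP: "\<alpha> i p \<in> PolyRing n" if i: "i < n" and p: "p \<in> PolyRing n" for i p
  proof -
    have "is_derivation n (\<alpha> i)" using T1 derL[OF i] by simp
    then show "\<alpha> i p \<in> PolyRing n" using p unfolding is_derivation_def by simp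
  qed
  have tri: "\<And>i k. i < n \<Longrightarrow> k < n \<Longrightarrow> i > k \<Longrightarrow> \<alpha> i (PVar k) = 0" using T7 by simp
  have diag: "\<And>k. k < n \<Longrightarrow> \<alpha> k (PVar k) \<noteq> 0"
    using prodnz by (metis finite_lessThan lessThan_iff prod_zero_iff)
  show ?thesis
  proof
    show "{u \<in> F1U n \<alpha> \<iota> j. d0 n \<iota> u = (\<lambda>k. 0)} \<subseteq> F0U n \<iota>"
    proof
      fix u assume "u \<in> {u \<in> F1U n \<alpha> \<iota> j. d0 n \<iota> u = (\<lambda>k. 0)}"
      then obtain s0 s where u: "u = \<iota> s0 + (\<Sum>i<n. \<iota> (s i) * j (\<alpha> i))"
        and s0: "s0 \<in> PolyRing n" and s: "\<forall>i<n. s i \<in> PolyRing n"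
        and d: "d0 n \<iota> u = (\<lambda>k. 0)"
        unfolding F1U_def by blast
      have dk: "(\<Sum>i<n. \<iota> (s i * \<alpha> i (PVar k))) = 0" if k: "k < n" for k
      proof -
        have xk: "PVar k \<in> PolyRing n" using PolyRing_PVar k .
        have c0: "\<iota> s0 * \<iota> (PVar k) - \<iota> (PVar k) * \<iota> s0 = 0"
          using mul[OF s0 xk] mul[OF xk s0] by (simp add: mult.commute)
        have ci: "\<iota> (s i) * j (\<alpha> i) * \<iota> (PVar k) - \<iota> (PVar k) * (\<iota> (s i) * j (\<alpha> i))
             = \<iota> (s i * \<alpha> i (PVar k))" if i: "i < n" for i
        proof -
          have "\<iota> (PVar k) * \<iota> (s i) = \<iota> (s i) * \<iota> (PVar k)"
            using mul[OF s[rule_format, OF i] xk] mul[OF xk s[rule_format, OF i]]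
            by (simp add: mult.commute)
          then have "\<iota> (s i) * j (\<alpha> i) * \<iota> (PVar k) - \<iota> (PVar k) * (\<iota> (s i) * j (\<alpha> i))
              = \<iota> (s i) * (j (\<alpha> i) * \<iota> (PVar k) - \<iota> (PVar k) * j (\<alpha> i))"
            by (simp add: algebra_simps flip: mult.assoc)
          also have "\<dots> = \<iota> (s i) * \<iota> (\<alpha> i (PVar k))"
            using comm[OF derL[OF i] xk] by simp
          also have "\<dots> = \<iota> (s i * \<alpha> i (PVar k))"
            using mul[OF s[rule_format, OF i] derP[OF i xk]] by simp
          finally show ?thesis .
        qed
        have "0 = u * \<iota> (PVar k) - \<iota> (PVar k) * u"
          using fun_cong[OF d, of k] k unfolding d0_def by simp
        also have "\<dots> = (\<iota> s0 * \<iota> (PVar k) - \<iota> (PVar k) * \<iota> s0) +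
            (\<Sum>i<n. \<iota> (s i) * j (\<alpha> i) * \<iota> (PVar k) - \<iota> (PVar k) * (\<iota> (s i) * j (\<alpha> i)))"
          unfolding u by (simp add: algebra_simps sum_distrib_left sum_distrib_right sum_subtractf)
        also have "\<dots> = (\<Sum>i<n. \<iota> (s i * \<alpha> i (PVar k)))"
          using c0 ci by simp
        finally show ?thesis by simp
      qed
      have sz: "\<forall>i<k. s i = 0" if "k \<le> n" for k
        using that
      proof (induction k)
        case 0 then show ?case by simp
      next
        case (Suc k)
        then have IH: "\<forall>i<k. s i = 0" and k: "k < n" by auto
        have "(\<Sum>i<n. \<iota> (s i * \<alpha> i (PVar k))) = (\<Sum>i\<in>{k}. \<iota> (s i * \<alpha> i (PVar k)))"
        proof (rule sum.mono_neutral_right)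
          show "\<forall>i\<in>{..<n} - {k}. \<iota> (s i * \<alpha> i (PVar k)) = 0"
          proof
            fix i assume "i \<in> {..<n} - {k}"
            then have "i < n" "i \<noteq> k" by auto
            then have "i < k \<or> i > k" by auto
            then show "\<iota> (s i * \<alpha> i (PVar k)) = 0"
              using IH tri[OF \<open>i < n\<close> k] i0 by auto
          qed
        qed (use k in auto)
        then have "\<iota> (s k * \<alpha> k (PVar k)) = 0" using dk[OF k] by simp
        then have "s k * \<alpha> k (PVar k) = 0"
          using inj[OF PolyRing_mult[OF s[rule_format, OF k] derP[OF k PolyRing_PVar[OF k]]]] by simp
        then have "s k = 0" using diag[OF k] by simp
        then show ?case using IH less_Suc_eq by auto
      qed
      have "u = \<iota> s0" using sz[of n] unfolding u by (simp add: i0)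
      then show "u \<in> F0U n \<iota>" using s0 unfolding F0U_def by blast
    qed
  next
    show "F0U n \<iota> \<subseteq> {u \<in> F1U n \<alpha> \<iota> j. d0 n \<iota> u = (\<lambda>k. 0)}"
    proof
      fix u assume "u \<in> F0U n \<iota>"
      then obtain s0 where u: "u = \<iota> s0" and s0: "s0 \<in> PolyRing n" unfolding F0U_def by blast
      have "u = \<iota> s0 + (\<Sum>i<n. \<iota> ((\<lambda>_. 0) i) * j (\<alpha> i))" using u i0 by simp
      have "u \<in> F1U n \<alpha> \<iota> j" unfolding F1U_def
        apply (rule CollectI)
        apply (rule exI[of _ s0], rule exI[of _ "\<lambda>_. 0"])
        using s0 u i0 by (simp add: PolyRing_zero)
      moreover have "d0 n \<iota> u = (\<lambda>k. 0)"
      proof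
        fix k
        show "d0 n \<iota> u k = 0"
        proof (cases "k < n")
          case True
          have xk: "PVar k \<in> PolyRing n" using PolyRing_PVar True .
          show ?thesis using True mul[OF s0 xk] mul[OF xk s0] unfolding d0_def u
            by (simp add: mult.commute)
        qed (simp add: d0_def)
      qed
      ultimately show "u \<in> {u \<in> F1U n \<alpha> \<iota> j. d0 n \<iota> u = (\<lambda>k. 0)}" by blast
    qed
  qed
qed

end
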